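(* Let $\mathcal{P}$ and $\mathcal{Q}$ be smooth regular curves with endpoints $p_0,p_1$ and $q_0,q_1$ respectively. Let $\ell_0$ be the line through $q_0$ parallel to $T_{q_1}\mathcal{Q}$, and $\ell_p'$ the line through $\tau_{q_0-p_0}(p_1)$ parallel to $T_{q_0}\mathcal{Q}$. Put $c=\ell_p'\cap T_{q_1}\mathcal{Q}$, $b_0=\ell_0\cap\ell_p'$, $b_1=T_{q_0}\mathcal{Q}\cap T_{q_1}\mathcal{Q}$. Assume: (i) $T_{p_i}\mathcal{P}\parallel T_{q_i}\mathcal{Q}$ for $i=0,1$; (ii) the curvature of $\mathcal{P}$ is positive and the curvature of $\mathcal{Q}$ is negative; (iii) the absolute values of the rotation numbers of $\mathcal{P}$ and $\mathcal{Q}$ are equal and smaller than $\frac12$; (iv) for every $p\in\mathcal{P}$ there is $q\in\mathcal{Q}$, and for every $q\in\mathcal{Q}$ there is $p\in\mathcal{P}$, such that $p,q$ is a parallel pair; (v) $\mathcal{P}$ and $\mathcal{Q}$ are curved in the same side at every parallel pair $p,q$ with $p\in\mathcal{P}$, $q\in\mathcal{Q}$. Let $\rho_{\max}$ and $\rho_{\min}$ be the maximum and the minimum of the set $\left\{\frac{c-b_1}{q_1-b_1},\ \frac{c-b_0}{\tau_{q_0-p_0}(p_1)-b_0}\right\}$. If $\rho_{\max}<1$ or $\rho_{\min}>1$, then the Centre Symmetry Set of $\mathcal{P}\cup\mathcal{Q}$ has at least one asymptote.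
   Context: $T_q\mathcal{C}$ is the tangent line to $\mathcal{C}$ at $q$; $\tau_v$ is translation by $v\in\mathbb{R}^2$. The quotient $\frac{u}{w}$ of two parallel vectors, $w\ne0$, is the real number $\lambda$ with $u=\lambda w$. The rotation number of a regular arc is the total signed turning of its velocity vector divided by $2\pi$. Distinct points $p,q$ form a parallel pair if their tangent lines are parallel. Curves are curved in the same side at a parallel pair $p,q$ (non-inflexion points) if the germ at $p$ and the translate by $p-q$ of the germ at $q$ lie on the same side of the tangent line at $p$. The Centre Symmetry Set is the envelope of lines through parallel pairs; a parallel pair $p,q$ gives an asymptote (the line through $p,q$) if, for local arc-length parameterizations $g$ near $p=g(t)$ and $f$ near $q=f(s)$ with $f'(s)=-g'(t)$, one has $\kappa_f(s)+\kappa_g(t)=0$. *)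

theory Defs
  imports "HOL-Analysis.Analysis"
begin

text \<open>The Euclidean plane is modelled by the complex numbers.
  A curve is given by a parametrisation on the closed interval [0,1].\<close>

definition cross :: "complex \<Rightarrow> complex \<Rightarrow> real" where
  "cross u v = Im (cnj u * v)"

definition dotp :: "complex \<Rightarrow> complex \<Rightarrow> real" where
  "dotp u v = Re (cnj u * v)"

definition vd :: "(real \<Rightarrow> complex) \<Rightarrow> real \<Rightarrow> complex" where
  "vd f t = vector_derivative f (at t)"

definition smooth_on :: "real set \<Rightarrow> (real \<Rightarrow> complex) \<Rightarrow> bool" where
  "smooth_on S f \<longleftrightarrow> (\<forall>n. \<forall>t\<in>S. ((vd ^^ n) f) differentiable (at t))"

definition smooth_regular_arc :: "(real \<Rightarrow> complex) \<Rightarrow> bool" where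
  "smooth_regular_arc f \<longleftrightarrow>
     (\<exists>S. open S \<and> {0..1} \<subseteq> S \<and> smooth_on S f) \<and>
     inj_on f {0..1} \<and> (\<forall>t\<in>{0..1}. vd f t \<noteq> 0)"

definition curvature :: "(real \<Rightarrow> complex) \<Rightarrow> real \<Rightarrow> real" where
  "curvature f t = cross (vd f t) (vd (vd f) t) / (norm (vd f t)) ^ 3"

definition rotation_number :: "(real \<Rightarrow> complex) \<Rightarrow> real \<Rightarrow> bool" where
  "rotation_number f r \<longleftrightarrow>
     (\<exists>\<theta>. continuous_on {0..1} \<theta> \<and>
          (\<forall>t\<in>{0..1}. vd f t = complex_of_real (norm (vd f t)) * cis (\<theta> t)) \<and>
          r = (\<theta> 1 - \<theta> 0) / (2 * pi))"

definition line_through :: "complex \<Rightarrow> complex \<Rightarrow> complex set" where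
  "line_through a u = {a + complex_of_real r * u | r. True}"

definition line_inter :: "complex set \<Rightarrow> complex set \<Rightarrow> complex" where
  "line_inter L M = (THE x. x \<in> L \<and> x \<in> M)"

definition vquot :: "complex \<Rightarrow> complex \<Rightarrow> real" where
  "vquot u w = (THE r. u = complex_of_real r * w)"

definition transl :: "complex \<Rightarrow> complex \<Rightarrow> complex" where
  "transl v x = x + v"

definition tangent_line :: "(real \<Rightarrow> complex) \<Rightarrow> real \<Rightarrow> complex set" where
  "tangent_line f t = line_through (f t) (vd f t)"

definition parallel_pair :: "(real \<Rightarrow> complex) \<Rightarrow> real \<Rightarrow> (real \<Rightarrow> complex) \<Rightarrow> real \<Rightarrow> bool" where
  "parallel_pair f t g s \<longleftrightarrow> t \<in> {0..1} \<and> s \<in> {0..1} \<and> f t \<noteq> g s \<and>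
     cross (vd f t) (vd g s) = 0"

text \<open>curved in the same side at the pair f t, g s: the germ of f at f t and the
  translate by (f t - g s) of the germ of g at g s lie (strictly) on the same
  side of the tangent line of f at f t\<close>
definition curved_same_side :: "(real \<Rightarrow> complex) \<Rightarrow> real \<Rightarrow> (real \<Rightarrow> complex) \<Rightarrow> real \<Rightarrow> bool" where
  "curved_same_side f t g s \<longleftrightarrow>
     (\<exists>e>0. \<forall>t'\<in>{0..1}. \<forall>s'\<in>{0..1}.
        0 < \<bar>t' - t\<bar> \<and> \<bar>t' - t\<bar> < e \<and> 0 < \<bar>s' - s\<bar> \<and> \<bar>s' - s\<bar> < e \<longrightarrow>
        cross (vd f t) (f t' - f t) * cross (vd f t) (transl (f t - g s) (g s') - f t) > 0)"

text \<open>the parallel pair f t, g s gives an asymptote: with arc-length parametrisations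
  oriented with unit tangent u = f'(t)/|f'(t)| at f t and -u at g s, the curvatures add
  to zero. The arc-length curvature of g oriented by -u equals -(u.v) * curvature g s,
  where v is the unit tangent of g at s (v = +-u).\<close>
definition gives_asymptote :: "(real \<Rightarrow> complex) \<Rightarrow> real \<Rightarrow> (real \<Rightarrow> complex) \<Rightarrow> real \<Rightarrow> bool" where
  "gives_asymptote f t g s \<longleftrightarrow>
     parallel_pair f t g s \<and>
     (let u = vd f t / complex_of_real (norm (vd f t));
          v = vd g s / complex_of_real (norm (vd g s))
      in curvature f t + (- dotp u v * curvature g s) = 0)"

definition CSS_has_asymptote :: "(real \<Rightarrow> complex) list \<Rightarrow> bool" where
  "CSS_has_asymptote cs \<longleftrightarrow>
     (\<exists>f\<in>set cs. \<exists>g\<in>set cs. \<exists>t s. gives_asymptote f t g s)"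

end

theory Submission imports Defs begin

lemma Ln_polar:
  assumes "r > 0" "-pi < x" "x \<le> pi"
  shows "Ln (of_real r * cis x) = of_real (ln r) + \<i> * of_real x"
proof -
  have "of_real r * cis x = exp (of_real (ln r) + \<i> * of_real x)"
    using assms by (simp add: cis_conv_exp exp_add exp_of_real)
  moreover have "Ln (exp (of_real (ln r) + \<i> * of_real x)) = of_real (ln r) + \<i> * of_real x"
    using assms by (intro Ln_exp) auto
  ultimately show ?thesis by simp
qed

lemma ev_nhds:
  assumes "\<forall>\<^sub>F x in at t. P x" "P t"
  shows "\<forall>\<^sub>F x in nhds t. P x"
proof -
  have "\<forall>\<^sub>F x in nhds t. x \<noteq> t \<longrightarrow> P x"
    using assms(1) by (simp add: eventually_at_filter)
  thus ?thesis by eventually_elim (use assms(2) in auto)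
qed

lemma angle_deriv:
  fixes v :: "real \<Rightarrow> complex" and \<theta> :: "real \<Rightarrow> real"
  assumes vd: "(v has_vector_derivative v') (at t)" and nz: "v t \<noteq> 0"
    and cont: "isCont \<theta> t"
    and ev: "\<forall>\<^sub>F x in at t. v x = of_real (norm (v x)) * cis (\<theta> x)"
    and eq: "v t = of_real (norm (v t)) * cis (\<theta> t)"
  shows "(\<theta> has_real_derivative cross (v t) v' / (norm (v t))^2) (at t)"
proof -
  have ev2: "\<forall>\<^sub>F x in nhds t. v x = of_real (norm (v x)) * cis (\<theta> x)"
  proof -
    have "\<forall>\<^sub>F x in nhds t. x \<noteq> t \<longrightarrow> v x = of_real (norm (v x)) * cis (\<theta> x)"
      using ev by (simp add: eventually_at_filter)
    thus ?thesis by eventually_elim (use eq in auto)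
  qed
  have "\<forall>\<^sub>F x in nhds t. dist (\<theta> x) (\<theta> t) < pi"
    using cont unfolding isCont_def by (intro ev_nhds) (auto simp: tendsto_iff)
  moreover have vc: "isCont v t"
    using vd has_vector_derivative_continuous by blast
  hence "\<forall>\<^sub>F x in nhds t. dist (v x) (v t) < norm (v t)"
    using nz unfolding isCont_def by (intro ev_nhds) (auto simp: tendsto_iff)
  ultimately have ev3: "\<forall>\<^sub>F x in nhds t. \<theta> x = \<theta> t + Im (Ln (v x / v t))"
    using ev2
  proof eventually_elim
    case (elim x)
    have vx: "v x \<noteq> 0" using elim(2) by (auto simp: dist_norm)
    have "v x / v t = of_real (norm (v x) / norm (v t)) * cis (\<theta> x - \<theta> t)"
      using elim(3) eq nz vx
      by (metis (no_types, lifting) cis_divide divide_divide_times_eq mult.commute of_real_divide times_divide_times_eq)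
    moreover have "-pi < \<theta> x - \<theta> t" "\<theta> x - \<theta> t \<le> pi" using elim(1) by (auto simp: dist_real_def)
    ultimately have "Ln (v x / v t) = of_real (ln (norm (v x) / norm (v t))) + \<i> * of_real (\<theta> x - \<theta> t)"
      using Ln_polar[of "norm (v x) / norm (v t)" "\<theta> x - \<theta> t"] vx nz by simp
    thus ?case by simp
  qed
  have d1: "((\<lambda>x. v x / v t) has_vector_derivative v' / v t) (at t)"
    using vd by (auto intro!: derivative_eq_intros simp: divide_inverse)
  have d2: "(Ln has_field_derivative inverse (v t / v t)) (at (v t / v t))"
    using nz by (intro has_field_derivative_Ln) auto
  have "((Ln \<circ> (\<lambda>x. v x / v t)) has_vector_derivative (v' / v t) * inverse (v t / v t)) (at t)"
    by (rule field_vector_diff_chain_at[OF d1 d2])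
  hence "((\<lambda>x. Ln (v x / v t)) has_vector_derivative v' / v t) (at t)"
    using nz by (simp add: o_def)
  hence "((\<lambda>x. \<theta> t + Im (Ln (v x / v t))) has_real_derivative Im (v' / v t)) (at t)"
    by (auto intro!: derivative_eq_intros)
  moreover have "Im (v' / v t) = cross (v t) v' / (norm (v t))^2"
    unfolding cross_def
    by (simp add: Im_divide cmod_power2)
  ultimately have "((\<lambda>x. \<theta> t + Im (Ln (v x / v t))) has_real_derivative cross (v t) v' / (norm (v t))^2) (at t)"
    by simp
  thus ?thesis
    using DERIV_cong_ev[OF refl ev3 refl] by simp
qed
lemma incr_open:
  fixes \<theta> :: "real \<Rightarrow> real"
  assumes \<theta>c: "continuous_on {0..1} \<theta>"
    and \<theta>d: "\<And>t. 0<t \<Longrightarrow> t<1 \<Longrightarrow> (\<theta> has_real_derivative d t) (at t)"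
    and dpos: "\<And>t. 0<t \<Longrightarrow> t<1 \<Longrightarrow> d t > 0"
    and xy: "0 \<le> x" "x < y" "y \<le> 1"
  shows "\<theta> x < \<theta> y"
  apply (rule DERIV_pos_imp_increasing_open[OF xy(2)])
  using \<theta>d dpos xy apply (metis le_less_trans less_le_trans)
  using \<theta>c xy by (auto intro: continuous_on_subset)

lemma reparam:
  fixes \<theta> :: "real \<Rightarrow> real" and f :: "real \<Rightarrow> complex"
  assumes \<theta>c: "continuous_on {0..1} \<theta>"
    and \<theta>d: "\<And>t. 0<t \<Longrightarrow> t<1 \<Longrightarrow> (\<theta> has_real_derivative d t) (at t)"
    and dpos: "\<And>t. 0<t \<Longrightarrow> t<1 \<Longrightarrow> d t > 0"
    and fc: "continuous_on {0..1} f"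
    and fd: "\<And>t. 0<t \<Longrightarrow> t<1 \<Longrightarrow> (f has_vector_derivative f' t) (at t)"
  defines "g \<equiv> inv_into {0..1} \<theta>"
  shows "\<forall>x\<in>{0..1}. \<forall>y\<in>{0..1}. x < y \<longrightarrow> \<theta> x < \<theta> y"
   and "\<forall>t\<in>{0..1}. g (\<theta> t) = t"
   and "\<forall>y\<in>{\<theta> 0..\<theta> 1}. g y \<in> {0..1} \<and> \<theta> (g y) = y"
   and "continuous_on {\<theta> 0..\<theta> 1} g"
   and "\<forall>y\<in>{\<theta> 0<..<\<theta> 1}. g y \<in> {0<..<1} \<and>
          (g has_real_derivative 1 / d (g y)) (at y) \<and>
          ((f \<circ> g) has_vector_derivative (1 / d (g y)) *\<^sub>R f' (g y)) (at y)"
proof -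
  have mono: "\<theta> x < \<theta> y" if "0 \<le> x" "x < y" "y \<le> 1" for x y
    using incr_open[OF \<theta>c \<theta>d dpos that] by auto
  thus M: "\<forall>x\<in>{0..1}. \<forall>y\<in>{0..1}. x < y \<longrightarrow> \<theta> x < \<theta> y" by auto
  have inj: "inj_on \<theta> {0..1}"
    by (rule inj_onI) (metis atLeastAtMost_iff linorder_neqE_linordered_idom mono order_less_irrefl)
  show G1: "\<forall>t\<in>{0..1}. g (\<theta> t) = t"
    unfolding g_def using inj by (simp add: inv_into_f_f)
  have img: "\<theta> ` {0..1} = {\<theta> 0..\<theta> 1}"
  proof
    show "\<theta> ` {0..1} \<subseteq> {\<theta> 0..\<theta> 1}"
      using mono by (auto simp: le_less)
    show "{\<theta> 0..\<theta> 1} \<subseteq> \<theta> ` {0..1}"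
    proof
      fix y assume "y \<in> {\<theta> 0..\<theta> 1}"
      then obtain x where "0 \<le> x" "x \<le> 1" "\<theta> x = y"
        using IVT'[of \<theta> 0 y 1] \<theta>c by auto
      thus "y \<in> \<theta> ` {0..1}" by auto
    qed
  qed
  show G2: "\<forall>y\<in>{\<theta> 0..\<theta> 1}. g y \<in> {0..1} \<and> \<theta> (g y) = y"
    unfolding g_def using img by (metis f_inv_into_f inv_into_into)
  show gc: "continuous_on {\<theta> 0..\<theta> 1} g"
    unfolding img[symmetric] by (rule continuous_on_inv[OF \<theta>c compact_Icc G1])
  show "\<forall>y\<in>{\<theta> 0<..<\<theta> 1}. g y \<in> {0<..<1} \<and>
          (g has_real_derivative 1 / d (g y)) (at y) \<and>
          ((f \<circ> g) has_vector_derivative (1 / d (g y)) *\<^sub>R f' (g y)) (at y)"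
  proof
    fix y assume y: "y \<in> {\<theta> 0<..<\<theta> 1}"
    hence gy: "g y \<in> {0..1}" "\<theta> (g y) = y" using G2 by auto
    have "g y \<noteq> 0" "g y \<noteq> 1" using gy y by auto
    hence gy': "g y \<in> {0<..<1}" using gy by auto
    have ic: "isCont g y"
      using continuous_on_interior[OF gc] y by auto
    have dg: "(g has_real_derivative inverse (d (g y))) (at y)"
      apply (rule DERIV_inverse_function[where a="\<theta> 0" and b="\<theta> 1"])
      using \<theta>d gy' dpos[of "g y"] y G2 ic by (auto simp: less_imp_le)
    hence dg': "(g has_real_derivative 1 / d (g y)) (at y)" by (simp add: inverse_eq_divide)
    have "((f \<circ> g) has_vector_derivative (1 / d (g y)) *\<^sub>R f' (g y)) (at y)"
      apply (rule vector_diff_chain_at)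
      using dg' has_real_derivative_iff_has_vector_derivative apply blast
      using fd gy' by auto
    thus "g y \<in> {0<..<1} \<and> (g has_real_derivative 1 / d (g y)) (at y) \<and>
          ((f \<circ> g) has_vector_derivative (1 / d (g y)) *\<^sub>R f' (g y)) (at y)"
      using gy' dg' by auto
  qed
qed

lemma cross_swap: "cross u v = - cross v u"
  unfolding cross_def by (simp add: algebra_simps)

lemma cross_cis: "cross (cis a) (cis b) = sin (b - a)"
  unfolding cross_def by (simp add: sin_diff algebra_simps)

lemma cone_aux:
  fixes F :: "real \<Rightarrow> complex"
  assumes ab: "\<alpha> < \<beta>" "\<beta> - \<alpha> < pi" and Fc: "continuous_on {\<alpha>..\<beta>} F"
    and Fd: "\<And>x. \<alpha><x \<Longrightarrow> x<\<beta> \<Longrightarrow> (F has_vector_derivative of_real (k x) * cis x) (at x)"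
    and kp: "\<And>x. \<alpha><x \<Longrightarrow> x<\<beta> \<Longrightarrow> k x > 0"
    and \<gamma>: "\<gamma> = \<alpha> \<or> \<gamma> = \<beta>"
  shows "\<And>x. \<alpha><x \<Longrightarrow> x<\<beta> \<Longrightarrow> ((\<lambda>x. cross (cis \<gamma>) (F x)) has_real_derivative k x * sin (x - \<gamma>)) (at x)"
    and "continuous_on {\<alpha>..\<beta>} (\<lambda>x. cross (cis \<gamma>) (F x))"
proof -
  fix x assume x: "\<alpha><x" "x<\<beta>"
  have "((\<lambda>x. Im (cnj (cis \<gamma>) * F x)) has_real_derivative Im (cnj (cis \<gamma>) * (of_real (k x) * cis x))) (at x)"
    by (intro has_field_derivative_Im has_vector_derivative_mult_right Fd x)
  moreover have "Im (cnj (cis \<gamma>) * (of_real (k x) * cis x)) = k x * sin (x - \<gamma>)"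
    using cross_cis[of \<gamma> x] unfolding cross_def by (simp add: sin_diff algebra_simps)
  ultimately show "((\<lambda>x. cross (cis \<gamma>) (F x)) has_real_derivative k x * sin (x - \<gamma>)) (at x)"
    unfolding cross_def by simp
next
  show "continuous_on {\<alpha>..\<beta>} (\<lambda>x. cross (cis \<gamma>) (F x))"
    unfolding cross_def by (intro continuous_intros Fc)
qed

lemma cone:
  fixes F :: "real \<Rightarrow> complex"
  assumes ab: "\<alpha> < \<beta>" "\<beta> - \<alpha> < pi" and Fc: "continuous_on {\<alpha>..\<beta>} F"
    and Fd: "\<And>x. \<alpha><x \<Longrightarrow> x<\<beta> \<Longrightarrow> (F has_vector_derivative of_real (k x) * cis x) (at x)"
    and kp: "\<And>x. \<alpha><x \<Longrightarrow> x<\<beta> \<Longrightarrow> k x > 0"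
  shows "cross (cis \<alpha>) (F \<beta> - F \<alpha>) > 0" "cross (F \<beta> - F \<alpha>) (cis \<beta>) > 0"
proof -
  note A = cone_aux[OF ab Fc Fd kp]
  have "cross (cis \<alpha>) (F \<alpha>) < cross (cis \<alpha>) (F \<beta>)"
  proof (rule DERIV_pos_imp_increasing_open[OF ab(1)])
    fix x assume x: "\<alpha> < x" "x < \<beta>"
    have "sin (x - \<alpha>) > 0" using x ab by (intro sin_gt_zero) auto
    thus "\<exists>y. ((\<lambda>x. cross (cis \<alpha>) (F x)) has_real_derivative y) (at x) \<and> 0 < y"
      using A(1)[of \<alpha> x] x kp[of x] by (intro exI[of _ "k x * sin (x - \<alpha>)"]) auto
  qed (use A(2) in auto)
  thus "cross (cis \<alpha>) (F \<beta> - F \<alpha>) > 0"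
    unfolding cross_def by (simp add: algebra_simps)
  have "cross (cis \<beta>) (F \<alpha>) > cross (cis \<beta>) (F \<beta>)"
  proof (rule DERIV_neg_imp_decreasing_open[OF ab(1)])
    fix x assume x: "\<alpha> < x" "x < \<beta>"
    have "sin (\<beta> - x) > 0" using x ab by (intro sin_gt_zero) auto
    hence "sin (x - \<beta>) < 0" by (metis minus_diff_eq neg_less_0_iff_less sin_minus)
    hence "k x * sin (x - \<beta>) < 0" using kp[of x] x by (simp add: mult_pos_neg)
    thus "\<exists>y. ((\<lambda>x. cross (cis \<beta>) (F x)) has_real_derivative y) (at x) \<and> y < 0"
      using A(1)[of \<beta> x] x by (intro exI[of _ "k x * sin (x - \<beta>)"]) auto
  qed (use A(2) in auto)
  thus "cross (F \<beta> - F \<alpha>) (cis \<beta>) > 0"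
    using cross_swap[of "F \<beta> - F \<alpha>" "cis \<beta>"] unfolding cross_def by (simp add: algebra_simps)
qed

lemma local_pos:
  fixes g g' :: "real \<Rightarrow> real"
  assumes S: "open S" "t \<in> S" and gd: "\<And>x. x\<in>S \<Longrightarrow> (g has_real_derivative g' x) (at x)"
    and g'd: "(g' has_real_derivative c) (at t)" and c: "c > 0" and g't: "g' t = 0"
  shows "\<exists>e>0. \<forall>x. 0 < \<bar>x - t\<bar> \<and> \<bar>x - t\<bar> < e \<longrightarrow> g x > g t"
proof -
  obtain d1 where d1: "d1 > 0" "\<forall>h>0. h < d1 \<longrightarrow> g' t < g' (t + h)"
    using DERIV_pos_inc_right[OF g'd c] by auto
  obtain d2 where d2: "d2 > 0" "\<forall>h>0. h < d2 \<longrightarrow> g' (t - h) < g' t"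
    using DERIV_pos_inc_left[OF g'd c] by auto
  obtain r where r: "r > 0" "ball t r \<subseteq> S" using S openE by blast
  define e where "e = min r (min d1 d2)"
  have e: "e > 0" using r d1 d2 by (simp add: e_def)
  have "g x > g t" if x: "0 < \<bar>x - t\<bar>" "\<bar>x - t\<bar> < e" for x
  proof (cases "x > t")
    case True
    have "\<exists>z. t < z \<and> z < x \<and> g x - g t = (x - t) * g' z"
      apply (rule MVT2[OF True])
      apply (rule gd) using r x True by (auto simp: e_def dist_real_def subset_iff)
    then obtain z where z: "t < z" "z < x" "g x - g t = (x - t) * g' z" by auto
    have "g' (t + (z - t)) > 0" using d1(2)[rule_format, of "z - t"] z x True g't by (auto simp: e_def)
    hence "(x - t) * g' (t + (z - t)) > 0" using True by simp
    thus ?thesis using z by simp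
  next
    case False
    hence xt: "x < t" using x by auto
    have "\<exists>z. x < z \<and> z < t \<and> g t - g x = (t - x) * g' z"
      apply (rule MVT2[OF xt])
      apply (rule gd) using r x xt by (auto simp: e_def dist_real_def subset_iff)
    then obtain z where z: "x < z" "z < t" "g t - g x = (t - x) * g' z" by auto
    have "g' (t - (t - z)) < 0" using d2(2)[rule_format, of "t - z"] z x xt g't by (auto simp: e_def)
    hence "g' z < 0" by simp
    hence "(t - x) * g' z < 0" using xt by (simp add: mult_pos_neg)
    thus ?thesis using z by simp
  qed
  thus ?thesis using e by blast
qed

lemma curve_local:
  fixes f :: "real \<Rightarrow> complex"
  assumes S: "open S" "t \<in> S" and fd: "\<And>x. x\<in>S \<Longrightarrow> (f has_vector_derivative vd f x) (at x)"
    and f'd: "(vd f has_vector_derivative vd (vd f) t) (at t)"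
    and w0: "cross w (vd f t) = 0" and w1: "cross w (vd (vd f) t) > 0"
  shows "\<exists>e>0. \<forall>x. 0 < \<bar>x - t\<bar> \<and> \<bar>x - t\<bar> < e \<longrightarrow> cross w (f x - f t) > 0"
proof -
  have "\<exists>e>0. \<forall>x. 0 < \<bar>x - t\<bar> \<and> \<bar>x - t\<bar> < e \<longrightarrow> Im (cnj w * f x) > Im (cnj w * f t)"
  proof (rule local_pos[OF S])
    show "((\<lambda>x. Im (cnj w * f x)) has_real_derivative Im (cnj w * vd f x)) (at x)" if "x \<in> S" for x
      by (intro has_field_derivative_Im has_vector_derivative_mult_right fd that)
    show "((\<lambda>x. Im (cnj w * vd f x)) has_real_derivative Im (cnj w * vd (vd f) t)) (at t)"
      by (intro has_field_derivative_Im has_vector_derivative_mult_right f'd)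
  qed (use w0 w1 in \<open>auto simp: cross_def\<close>)
  thus ?thesis unfolding cross_def by (simp add: algebra_simps)
qed

lemma line_scale: "k \<noteq> 0 \<Longrightarrow> line_through p (of_real k * u) = line_through p u"
  unfolding line_through_def
proof (safe)
  fix r assume "k \<noteq> 0"
  show "\<exists>r'. p + of_real r * (of_real k * u) = p + of_real r' * u \<and> True"
    by (intro exI[of _ "r * k"]) auto
next
  fix r assume k: "k \<noteq> 0"
  show "\<exists>r'. p + of_real r * u = p + of_real r' * (of_real k * u) \<and> True"
    using k by (intro exI[of _ "r / k"]) auto
qed

lemma cross_smult: "cross (of_real r * u) v = r * cross u v" "cross u (of_real r * v) = r * cross u v"
  unfolding cross_def by (auto simp: algebra_simps)

lemma cross_self: "cross u u = 0"
  unfolding cross_def by (simp add: complex_mult_cnj)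

lemma line_inter_eq:
  assumes uw: "cross u w \<noteq> 0" and x1: "x = p + of_real r * u" and x2: "x = q + of_real s * w"
  shows "line_inter (line_through p u) (line_through q w) = x"
  unfolding line_inter_def
proof (rule the_equality)
  show "x \<in> line_through p u \<and> x \<in> line_through q w"
    using x1 x2 unfolding line_through_def by blast
next
  fix y assume "y \<in> line_through p u \<and> y \<in> line_through q w"
  hence "\<exists>r'. y = p + of_real r' * u" "\<exists>s'. y = q + of_real s' * w"
    unfolding line_through_def by blast+
  then obtain r' s' where y: "y = p + of_real r' * u" "y = q + of_real s' * w"
    by blast
  have "x - y = of_real (r - r') * u"
    unfolding x1 y(1) by (simp add: algebra_simps)
  moreover have "x - y = of_real (s - s') * w"
    unfolding x2 y(2) by (simp add: algebra_simps)
  ultimately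
  have "of_real (r - r') * u = of_real (s - s') * w" by (metis)
  hence "cross u (of_real (r - r') * u) = cross u (of_real (s - s') * w)" by simp
  hence "(s - s') * cross u w = 0" by (simp only: cross_smult cross_self)
  hence "s = s'" using uw by simp
  thus "y = x" using x2 y by simp
qed

lemma vquot_eq: "w \<noteq> 0 \<Longrightarrow> vquot (of_real r * w) w = r"
  unfolding vquot_def by (rule the_equality) auto

lemma decomp:
  assumes "cross a b \<noteq> 0"
  shows "D = of_real (cross D b / cross a b) * a + of_real (cross a D / cross a b) * b"
proof -
  let ?c = "cross a b"
  have e: "of_real ?c * D = of_real (cross D b) * a + of_real (cross a D) * b"
    unfolding cross_def by (simp add: complex_eq_iff algebra_simps)
  have "D = of_real (1 / ?c) * (of_real ?c * D)" using assms by (simp flip: of_real_mult)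
  also have "\<dots> = of_real (1 / ?c) * (of_real (cross D b) * a + of_real (cross a D) * b)" using e by simp
  also have "\<dots> = of_real (cross D b / ?c) * a + of_real (cross a D / ?c) * b"
    by (simp add: algebra_simps)
  finally show ?thesis .
qed

lemma rho_fail:
  fixes Q :: "real \<Rightarrow> complex"
  assumes ab: "cross a b \<noteq> 0"
    and A: "vd Q 1 = of_real kA * a" "kA \<noteq> 0" and B: "vd Q 0 = of_real kB * b" "kB \<noteq> 0"
    and Qe: "Q 0 = q1" "Q 1 = q0"
    and pos: "xP > 0" "yP > 0" "xQ > 0" "yQ > 0"
    and DP: "p1 - p0 = of_real xP * a + of_real yP * b"
    and DQ: "q1 - q0 = of_real xQ * a + of_real yQ * b"
    and ord: "(xP > xQ \<and> yP > yQ) \<or> (xP < xQ \<and> yP < yQ)"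
  shows "\<not> (let p1' = transl (q0 - p0) p1;
                  l0 = line_through q0 (vd Q 0);
                  lp' = line_through p1' (vd Q 1);
                  c = line_inter lp' (tangent_line Q 0);
                  b0 = line_inter l0 lp';
                  b1 = line_inter (tangent_line Q 1) (tangent_line Q 0);
                  R = {vquot (c - b1) (q1 - b1), vquot (c - b0) (p1' - b0)}
              in Max R < 1 \<or> Min R > 1)"
proof -
  have a0: "a \<noteq> 0" and b0: "b \<noteq> 0" using ab unfolding cross_def by auto
  have ba: "cross b a \<noteq> 0" using ab cross_swap[of b a] by simp
  define p1' where "p1' = transl (q0 - p0) p1"
  have p1': "p1' = q0 + of_real xP * a + of_real yP * b"
    using DP unfolding p1'_def transl_def by (simp add: algebra_simps)
  have q1: "q1 = q0 + of_real xQ * a + of_real yQ * b" using DQ by (simp add: algebra_simps)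
  have L0: "line_through q0 (vd Q 0) = line_through q0 b" using B line_scale by simp
  have Lp: "line_through p1' (vd Q 1) = line_through p1' a" using A line_scale by simp
  have T0: "tangent_line Q 0 = line_through q1 b" unfolding tangent_line_def using B Qe line_scale by simp
  have T1: "tangent_line Q 1 = line_through q0 a" unfolding tangent_line_def using A Qe line_scale by simp
  have c: "line_inter (line_through p1' a) (line_through q1 b) = q0 + of_real xQ * a + of_real yP * b"
    by (rule line_inter_eq[OF ab, where r="xQ - xP" and s="yP - yQ"])
       (simp_all add: p1' q1 algebra_simps)
  have bb0: "line_inter (line_through q0 b) (line_through p1' a) = q0 + of_real yP * b"
    by (rule line_inter_eq[OF ba, where r="yP" and s="- xP"])
       (simp_all add: p1' algebra_simps)
  have bb1: "line_inter (line_through q0 a) (line_through q1 b) = q0 + of_real xQ * a"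
    by (rule line_inter_eq[OF ab, where r="xQ" and s="- yQ"])
       (simp_all add: q1 algebra_simps)
  have v1: "vquot (q0 + of_real xQ * a + of_real yP * b - (q0 + of_real xQ * a))
                  (q1 - (q0 + of_real xQ * a)) = yP / yQ"
  proof -
    have "q0 + of_real xQ * a + of_real yP * b - (q0 + of_real xQ * a) = of_real (yP / yQ) * (of_real yQ * b)"
      using pos by (simp add: field_simps)
    moreover have "q1 - (q0 + of_real xQ * a) = of_real yQ * b" using q1 by simp
    ultimately show ?thesis using vquot_eq[of "of_real yQ * b" "yP / yQ"] pos b0 by simp
  qed
  have v2: "vquot (q0 + of_real xQ * a + of_real yP * b - (q0 + of_real yP * b))
                  (p1' - (q0 + of_real yP * b)) = xQ / xP"
  proof -
    have "q0 + of_real xQ * a + of_real yP * b - (q0 + of_real yP * b) = of_real (xQ / xP) * (of_real xP * a)"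
      using pos by (simp add: field_simps)
    moreover have "p1' - (q0 + of_real yP * b) = of_real xP * a" using p1' by simp
    ultimately show ?thesis using vquot_eq[of "of_real xP * a" "xQ / xP"] pos a0 by simp
  qed
  have fin: "\<not> (Max {yP / yQ, xQ / xP} < 1 \<or> Min {yP / yQ, xQ / xP} > 1)"
  proof -
    have "(yP / yQ > 1 \<and> xQ / xP < 1) \<or> (yP / yQ < 1 \<and> xQ / xP > 1)"
      using ord pos by (auto simp: field_simps)
    thus ?thesis by auto
  qed
  show ?thesis
    unfolding Let_def p1'_def[symmetric] L0 Lp T0 T1 c bb0 bb1 v1 v2 using fin by simp
qed

lemma arc_facts:
  assumes "smooth_regular_arc f"
  obtains S where "open S" "{0..1} \<subseteq> S"
    "\<And>x. x\<in>S \<Longrightarrow> (f has_vector_derivative vd f x) (at x)"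
    "\<And>x. x\<in>S \<Longrightarrow> (vd f has_vector_derivative vd (vd f) x) (at x)"
    "\<And>x. x\<in>S \<Longrightarrow> isCont (vd (vd f)) x"
    "inj_on f {0..1}" "\<And>t. t\<in>{0..1} \<Longrightarrow> vd f t \<noteq> 0"
proof -
  obtain S where S: "open S" "{0..1} \<subseteq> S" "smooth_on S f" and inj: "inj_on f {0..1}"
    and nz: "\<forall>t\<in>{0..1}. vd f t \<noteq> 0"
    using assms unfolding smooth_regular_arc_def by blast
  have d0: "f differentiable (at x)" and d1: "vd f differentiable (at x)"
    and d2: "vd (vd f) differentiable (at x)" if "x \<in> S" for x
  proof -
    have "\<forall>t\<in>S. ((vd^^n) f) differentiable (at t)" for n using S(3) unfolding smooth_on_def by blast
    note h = this[of 0] this[of 1] this[of 2]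
    show "f differentiable (at x)" "vd f differentiable (at x)" "vd (vd f) differentiable (at x)"
      using h that by (auto simp: numeral_2_eq_2)
  qed
  show ?thesis
  proof (rule that[OF S(1,2) _ _ _ inj])
    show "(f has_vector_derivative vd f x) (at x)" if "x \<in> S" for x
      using d0[OF that] unfolding vd_def by (simp add: vector_derivative_works)
    show "(vd f has_vector_derivative vd (vd f) x) (at x)" if "x \<in> S" for x
      using d1[OF that] unfolding vd_def[of "vd f"] by (simp add: vector_derivative_works)
    show "isCont (vd (vd f)) x" if "x \<in> S" for x
      using d2[OF that] by (simp add: differentiable_imp_continuous_within)
  qed (use nz in auto)
qed

lemma arc_cont:
  assumes "smooth_regular_arc f"
  shows "continuous_on {0..1} f" "continuous_on {0..1} (vd f)" "continuous_on {0..1} (curvature f)"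
proof -
  obtain S where S: "open S" "{0..1} \<subseteq> S"
    "\<And>x. x\<in>S \<Longrightarrow> (f has_vector_derivative vd f x) (at x)"
    "\<And>x. x\<in>S \<Longrightarrow> (vd f has_vector_derivative vd (vd f) x) (at x)"
    "\<And>x. x\<in>S \<Longrightarrow> isCont (vd (vd f)) x"
    "\<And>t. t\<in>{0..1} \<Longrightarrow> vd f t \<noteq> 0"
    using arc_facts[OF assms] by metis
  have c0: "isCont f x" if "x \<in> {0..1}" for x
    using S(3)[of x] S(2) that has_vector_derivative_continuous by blast
  have c1: "isCont (vd f) x" if "x \<in> {0..1}" for x
    using S(4)[of x] S(2) that has_vector_derivative_continuous by blast
  have c2: "isCont (vd (vd f)) x" if "x \<in> {0..1}" for x
    using S(5)[of x] S(2) that by blast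
  show "continuous_on {0..1} f" using c0 by (intro continuous_at_imp_continuous_on) auto
  show "continuous_on {0..1} (vd f)" using c1 by (intro continuous_at_imp_continuous_on) auto
  show "continuous_on {0..1} (curvature f)"
  proof (intro continuous_at_imp_continuous_on ballI)
    fix x :: real assume x: "x \<in> {0..1}"
    show "isCont (curvature f) x"
      unfolding curvature_def[abs_def] cross_def
      using c1[OF x] c2[OF x] S(6)[OF x] by (intro continuous_intros) auto
  qed
qed

lemma angle_fun:
  assumes arc: "smooth_regular_arc f" and rot: "rotation_number f r"
  obtains \<theta> where "continuous_on {0..1} \<theta>"
    "\<And>t. t\<in>{0..1} \<Longrightarrow> vd f t = of_real (norm (vd f t)) * cis (\<theta> t)"
    "r = (\<theta> 1 - \<theta> 0) / (2*pi)"
    "\<And>t. 0<t \<Longrightarrow> t<1 \<Longrightarrow> (\<theta> has_real_derivative curvature f t * norm (vd f t)) (at t)"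
proof -
  obtain S where S: "open S" "{0..1} \<subseteq> S"
    "\<And>x. x\<in>S \<Longrightarrow> (f has_vector_derivative vd f x) (at x)"
    "\<And>x. x\<in>S \<Longrightarrow> (vd f has_vector_derivative vd (vd f) x) (at x)"
    "\<And>t. t\<in>{0..1} \<Longrightarrow> vd f t \<noteq> 0"
    using arc_facts[OF arc] by metis
  obtain \<theta> where th: "continuous_on {0..1} \<theta>"
    "\<forall>t\<in>{0..1}. vd f t = complex_of_real (norm (vd f t)) * cis (\<theta> t)"
    "r = (\<theta> 1 - \<theta> 0) / (2 * pi)"
    using rot unfolding rotation_number_def by blast
  show ?thesis
  proof (rule that[OF th(1) _ th(3)])
    show "vd f t = of_real (norm (vd f t)) * cis (\<theta> t)" if "t\<in>{0..1}" for t using th(2) that by blast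
    fix t :: real assume t: "0 < t" "t < 1"
    have ev: "\<forall>\<^sub>F x in at t. vd f x = of_real (norm (vd f x)) * cis (\<theta> x)"
    proof -
      have "\<forall>\<^sub>F x in at t. x \<in> {0<..<1}" using eventually_at_in_open'[of "{0<..<1}" t] t by auto
      thus ?thesis by eventually_elim (use th(2) in auto)
    qed
    have D: "(\<theta> has_real_derivative cross (vd f t) (vd (vd f) t) / (norm (vd f t))^2) (at t)"
      apply (rule angle_deriv[OF S(4) S(5) _ ev])
      using S(2) t apply auto[2]
      using continuous_on_interior[OF th(1)] t apply auto[1]
      using th(2) t by auto
    have "cross (vd f t) (vd (vd f) t) / (norm (vd f t))^2 = curvature f t * norm (vd f t)"
      using S(5)[of t] t unfolding curvature_def by (simp add: power_def field_simps)
    thus "(\<theta> has_real_derivative curvature f t * norm (vd f t)) (at t)" using D by simp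
  qed
qed

lemma cross_diff: "cross u (v - w) = cross u v - cross u w" "cross (v - w) u = cross v u - cross w u"
  unfolding cross_def by (auto simp: algebra_simps)

lemma cross_neg: "cross (- u) v = - cross u v" "cross u (- v) = - cross u v"
  unfolding cross_def by auto

lemma cross_polar: "cross (of_real a * cis x) (of_real b * cis y) = a * b * sin (y - x)"
  by (simp add: cross_smult cross_cis)

lemma sin_inj:
  assumes "\<alpha> \<le> x" "x \<le> \<beta>" "\<alpha> \<le> y" "y \<le> \<beta>" "\<beta> - \<alpha> < pi" "sin (x - y) = 0"
  shows "x = y"
  using sin_eq_0_pi[of "x - y"] assms by auto

lemma curv_cross:
  assumes "vd f t \<noteq> 0"
  shows "cross (vd f t) (vd (vd f) t) = curvature f t * norm (vd f t) ^ 3"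
  using assms unfolding curvature_def by simp

lemma scale_helper:
  assumes "v = of_real n * cis y" "n \<noteq> 0" "k \<noteq> 0"
  shows "(1 / (k * n)) *\<^sub>R v = of_real (1 / k) * cis y"
  using assms by (simp add: scaleR_conv_of_real field_simps)

lemma scale_helper2:
  assumes "v = - of_real n * cis y" "n \<noteq> 0" "k \<noteq> 0"
  shows "(- 1) *\<^sub>R ((1 / (- (k * n))) *\<^sub>R v) = of_real (- 1 / k) * cis y"
  using assms by (simp add: scaleR_conv_of_real field_simps)

lemma div_helper: "(v::complex) = of_real n * c \<Longrightarrow> n \<noteq> 0 \<Longrightarrow> v / of_real n = c"
  by (simp add: field_simps)

lemma div_helper2: "(v::complex) = - of_real n * c \<Longrightarrow> n \<noteq> 0 \<Longrightarrow> v / of_real n = - c"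
  by (simp add: field_simps)

lemma dotp_cis: "dotp (cis y) (- cis y) = -1"
  unfolding dotp_def by (simp add: cis_cnj cis_mult)

lemma const_sign:
  fixes h :: "real \<Rightarrow> real"
  assumes hc: "continuous_on {a..b} h" and nz: "\<And>y. a < y \<Longrightarrow> y < b \<Longrightarrow> h y \<noteq> 0"
  shows "(\<forall>y. a < y \<and> y < b \<longrightarrow> h y > 0) \<or> (\<forall>y. a < y \<and> y < b \<longrightarrow> h y < 0)"
proof (rule ccontr)
  assume "\<not> ?thesis"
  then obtain x z where x: "a < x" "x < b" "h x < 0" and z: "a < z" "z < b" "h z > 0"
    using nz by (metis linorder_neqE_linordered_idom)
  show False
  proof (cases "x \<le> z")
    case True
    have "continuous_on {x..z} h" using hc x z by (auto intro: continuous_on_subset)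
    then obtain w where "x \<le> w" "w \<le> z" "h w = 0" using IVT'[of h x 0 z] x z True by auto
    thus False using nz[of w] x z by auto
  next
    case False
    have "continuous_on {z..x} h" using hc x z by (auto intro: continuous_on_subset)
    then obtain w where "z \<le> w" "w \<le> x" "h w = 0" using IVT2'[of h x 0 z] x z False by auto
    thus False using nz[of w] x z by auto
  qed
qed

theorem theorem4p12:
  fixes P Q :: "real \<Rightarrow> complex" and p0 p1 q0 q1 :: complex
    and rP rQ :: real
  assumes P_arc: "smooth_regular_arc P" and Q_arc: "smooth_regular_arc Q"
    and P_ends: "P 0 = p0" "P 1 = p1"
    and Q_ends: "Q 0 = q1" "Q 1 = q0"
    and i0: "cross (vd P 0) (vd Q 1) = 0"
    and i1: "cross (vd P 1) (vd Q 0) = 0"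
    and ii_P: "\<forall>t\<in>{0..1}. curvature P t > 0"
    and ii_Q: "\<forall>s\<in>{0..1}. curvature Q s < 0"
    and iii_P: "rotation_number P rP" and iii_Q: "rotation_number Q rQ"
    and iii: "\<bar>rP\<bar> = \<bar>rQ\<bar>" "\<bar>rP\<bar> < 1/2"
    and iv_P: "\<forall>t\<in>{0..1}. \<exists>s\<in>{0..1}. parallel_pair P t Q s"
    and iv_Q: "\<forall>s\<in>{0..1}. \<exists>t\<in>{0..1}. parallel_pair P t Q s"
    and v: "\<forall>t\<in>{0..1}. \<forall>s\<in>{0..1}. parallel_pair P t Q s \<longrightarrow> curved_same_side P t Q s"
    and rho: "let p1' = transl (q0 - p0) p1;
                  l0 = line_through q0 (vd Q 0);
                  lp' = line_through p1' (vd Q 1);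
                  c = line_inter lp' (tangent_line Q 0);
                  b0 = line_inter l0 lp';
                  b1 = line_inter (tangent_line Q 1) (tangent_line Q 0);
                  R = {vquot (c - b1) (q1 - b1), vquot (c - b0) (p1' - b0)}
              in Max R < 1 \<or> Min R > 1"
  shows "CSS_has_asymptote [P, Q]"
proof (rule ccontr)
  assume noas: "\<not> CSS_has_asymptote [P, Q]"
  obtain SP where SP: "open SP" "{0..1} \<subseteq> SP"
    "\<And>x. x\<in>SP \<Longrightarrow> (P has_vector_derivative vd P x) (at x)"
    "\<And>x. x\<in>SP \<Longrightarrow> (vd P has_vector_derivative vd (vd P) x) (at x)"
    "\<And>t. t\<in>{0..1} \<Longrightarrow> vd P t \<noteq> 0"
    using arc_facts[OF P_arc] by metis
  obtain SQ where SQ: "open SQ" "{0..1} \<subseteq> SQ"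
    "\<And>x. x\<in>SQ \<Longrightarrow> (Q has_vector_derivative vd Q x) (at x)"
    "\<And>x. x\<in>SQ \<Longrightarrow> (vd Q has_vector_derivative vd (vd Q) x) (at x)"
    "\<And>t. t\<in>{0..1} \<Longrightarrow> vd Q t \<noteq> 0"
    using arc_facts[OF Q_arc] by metis
  note Pc = arc_cont[OF P_arc] and Qc = arc_cont[OF Q_arc]
  obtain \<theta> where th: "continuous_on {0..1} \<theta>"
    "\<And>t. t\<in>{0..1} \<Longrightarrow> vd P t = of_real (norm (vd P t)) * cis (\<theta> t)"
    "rP = (\<theta> 1 - \<theta> 0) / (2*pi)"
    "\<And>t. 0<t \<Longrightarrow> t<1 \<Longrightarrow> (\<theta> has_real_derivative curvature P t * norm (vd P t)) (at t)"
    using angle_fun[OF P_arc iii_P] by metis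
  obtain \<phi> where ph: "continuous_on {0..1} \<phi>"
    "\<And>t. t\<in>{0..1} \<Longrightarrow> vd Q t = of_real (norm (vd Q t)) * cis (\<phi> t)"
    "rQ = (\<phi> 1 - \<phi> 0) / (2*pi)"
    "\<And>t. 0<t \<Longrightarrow> t<1 \<Longrightarrow> (\<phi> has_real_derivative curvature Q t * norm (vd Q t)) (at t)"
    using angle_fun[OF Q_arc iii_Q] by metis
  define \<alpha> where "\<alpha> = \<theta> 0"
  define \<beta> where "\<beta> = \<theta> 1"
  have Pd': "(P has_vector_derivative vd P t) (at t)" if "0 < t" "t < 1" for t
    by (rule SP(3)) (use SP(2) that in auto)
  have Qd': "(Q has_vector_derivative vd Q t) (at t)" if "0 < t" "t < 1" for t
    by (rule SQ(3)) (use SQ(2) that in auto)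
  have dPpos: "curvature P t * norm (vd P t) > 0" if "0 < t" "t < 1" for t
    using ii_P SP(5)[of t] that by auto
  note RP = reparam[OF th(1) th(4) dPpos Pc(1) Pd']
  define gP where "gP = inv_into {0..1} \<theta>"
  have ab: "\<alpha> < \<beta>" using RP(1) unfolding \<alpha>_def \<beta>_def by auto
  have mph_d: "((\<lambda>s. - \<phi> s) has_real_derivative - (curvature Q t * norm (vd Q t))) (at t)"
    if "0 < t" "t < 1" for t
    using ph(4)[OF that] by (auto intro!: derivative_eq_intros)
  have dQpos: "- (curvature Q t * norm (vd Q t)) > 0" if "0 < t" "t < 1" for t
    using ii_Q SQ(5)[of t] that by (auto simp: mult_neg_pos)
  have mphc: "continuous_on {0..1} (\<lambda>s. - \<phi> s)" using ph(1) by (intro continuous_intros)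
  have ph10: "- \<phi> 0 < - \<phi> 1" using incr_open[OF mphc mph_d dQpos, of 0 1] by auto
  have rPpos: "rP > 0" using th(3) ab unfolding \<alpha>_def \<beta>_def by (simp add: divide_pos_pos)
  have rQneg: "rQ < 0" using ph(3) ph10 by (simp add: divide_neg_pos)
  have width: "\<phi> 0 - \<phi> 1 = \<beta> - \<alpha>"
    using iii(1) rPpos rQneg th(3) ph(3) unfolding \<alpha>_def \<beta>_def by (auto simp: field_simps)
  have narrow: "\<beta> - \<alpha> < pi"
    using iii(2) rPpos th(3) unfolding \<alpha>_def \<beta>_def by (auto simp: field_simps)
  define \<delta> where "\<delta> = \<phi> 1 - \<alpha>"
  have "cross (vd P 0) (vd Q 1) = norm (vd P 0) * norm (vd Q 1) * sin (\<phi> 1 - \<alpha>)"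
    using th(2)[of 0] ph(2)[of 1] cross_polar[of "norm (vd P 0)" "\<theta> 0" "norm (vd Q 1)" "\<phi> 1"]
    unfolding \<alpha>_def by (metis atLeastAtMost_iff order_refl zero_le_one)
  hence sd: "sin \<delta> = 0" using i0 SP(5)[of 0] SQ(5)[of 1] unfolding \<delta>_def by simp
  define \<sigma> where "\<sigma> = cos \<delta>"
  have "\<sigma>^2 = 1" using sin_cos_squared_add[of \<delta>] sd unfolding \<sigma>_def by simp
  hence \<sigma>: "\<sigma> = 1 \<or> \<sigma> = -1" by (simp add: power2_eq_1_iff)
  have cisd: "cis \<delta> = of_real \<sigma>" unfolding \<sigma>_def using sd by (simp add: complex_eq_iff)
  define \<psi> where "\<psi> s = \<phi> s - \<delta>" for s
  have psi1: "\<psi> 1 = \<alpha>" and psi0: "\<psi> 0 = \<beta>" using width unfolding \<psi>_def \<delta>_def by auto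
  have vdQ: "vd Q s = of_real (\<sigma> * norm (vd Q s)) * cis (\<psi> s)" if "s \<in> {0..1}" for s
  proof -
    define n where "n = norm (vd Q s)"
    have "cis (\<phi> s) = cis (\<psi> s) * cis \<delta>" unfolding \<psi>_def by (simp add: cis_mult)
    hence "vd Q s = of_real n * (cis (\<psi> s) * of_real \<sigma>)" using ph(2)[OF that] cisd unfolding n_def by simp
    thus ?thesis unfolding n_def[symmetric] by (simp add: algebra_simps)
  qed
  define \<theta>Q where "\<theta>Q s = - \<psi> s" for s
  have thQc: "continuous_on {0..1} \<theta>Q" unfolding \<theta>Q_def \<psi>_def using ph(1) by (intro continuous_intros)
  have thQd: "(\<theta>Q has_real_derivative - (curvature Q t * norm (vd Q t))) (at t)" if "0 < t" "t < 1" for t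
    unfolding \<theta>Q_def \<psi>_def using ph(4)[OF that] by (auto intro!: derivative_eq_intros)
  note RQ = reparam[OF thQc thQd dQpos Qc(1) Qd']
  define gQ where "gQ = inv_into {0..1} \<theta>Q"
  have thQ0: "\<theta>Q 0 = - \<beta>" and thQ1: "\<theta>Q 1 = - \<alpha>" unfolding \<theta>Q_def using psi0 psi1 by auto
  have psi_range: "\<alpha> \<le> \<psi> s \<and> \<psi> s \<le> \<beta>" if "s \<in> {0..1}" for s
  proof -
    have "\<theta>Q 0 \<le> \<theta>Q s" "\<theta>Q s \<le> \<theta>Q 1" using RQ(1) that by (auto simp: le_less)
    thus ?thesis using thQ0 thQ1 unfolding \<theta>Q_def by auto
  qed
  have th_range: "\<alpha> \<le> \<theta> t \<and> \<theta> t \<le> \<beta>" if "t \<in> {0..1}" for t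
  proof -
    have "\<theta> 0 \<le> \<theta> t" "\<theta> t \<le> \<theta> 1" using RP(1) that by (auto simp: le_less)
    thus ?thesis unfolding \<alpha>_def \<beta>_def by auto
  qed
  have sigma: "\<sigma> = -1"
  proof (rule ccontr)
    assume "\<sigma> \<noteq> -1"
    hence s1: "\<sigma> = 1" using \<sigma> by auto
    obtain s where s: "s \<in> {0..1}" "parallel_pair P 0 Q s" using iv_P[rule_format, of 0] by auto
    have vQs: "vd Q s = of_real (norm (vd Q s)) * cis (\<psi> s)" using vdQ[OF s(1)] s1 by simp
    have vP0: "vd P 0 = of_real (norm (vd P 0)) * cis \<alpha>" using th(2)[of 0] unfolding \<alpha>_def by simp
    have "0 = cross (vd P 0) (vd Q s)" using s(2) unfolding parallel_pair_def by simp
    also have "\<dots> = norm (vd P 0) * norm (vd Q s) * sin (\<psi> s - \<alpha>)"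
      using vQs vP0 cross_polar by metis
    finally have "sin (\<psi> s - \<alpha>) = 0" using SP(5)[of 0] SQ(5)[OF s(1)] by simp
    hence psis: "\<psi> s = \<alpha>" using sin_inj[of \<alpha> "\<psi> s" \<beta> \<alpha>] psi_range[OF s(1)] ab narrow by auto
    define c where "c = norm (vd P 0) / norm (vd Q s)"
    have cpos: "c > 0" using SP(5)[of 0] SQ(5)[OF s(1)] unfolding c_def by auto
    have vP0Q: "vd P 0 = of_real c * vd Q s"
    proof -
      have "of_real c * vd Q s = of_real c * (of_real (norm (vd Q s)) * cis \<alpha>)" using vQs psis by metis
      also have "\<dots> = of_real (norm (vd P 0)) * cis \<alpha>" using SQ(5)[OF s(1)] unfolding c_def by simp
      finally show ?thesis using vP0 by simp
    qed
    have css: "curved_same_side P 0 Q s" using v s by auto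
    then obtain e where e: "e > 0" and
      eP: "\<forall>t'\<in>{0..1}. \<forall>s'\<in>{0..1}.
        0 < \<bar>t' - 0\<bar> \<and> \<bar>t' - 0\<bar> < e \<and> 0 < \<bar>s' - s\<bar> \<and> \<bar>s' - s\<bar> < e \<longrightarrow>
        cross (vd P 0) (P t' - P 0) * cross (vd P 0) (transl (P 0 - Q s) (Q s') - P 0) > 0"
      unfolding curved_same_side_def by blast
    obtain e1 where e1: "e1 > 0" "\<forall>x. 0 < \<bar>x - 0\<bar> \<and> \<bar>x - 0\<bar> < e1 \<longrightarrow> cross (vd P 0) (P x - P 0) > 0"
    proof -
      have "\<exists>e>0. \<forall>x. 0 < \<bar>x - 0\<bar> \<and> \<bar>x - 0\<bar> < e \<longrightarrow> cross (vd P 0) (P x - P 0) > 0"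
      proof (rule curve_local[OF SP(1) _ SP(3) SP(4)])
        show "cross (vd P 0) (vd P 0) = 0" by (rule cross_self)
        show "cross (vd P 0) (vd (vd P) 0) > 0"
          using curv_cross[OF SP(5)[of 0]] ii_P SP(5)[of 0] by simp
      qed (use SP(2) in auto)
      thus ?thesis using that by blast
    qed
    obtain e2 where e2: "e2 > 0" "\<forall>x. 0 < \<bar>x - s\<bar> \<and> \<bar>x - s\<bar> < e2 \<longrightarrow> cross (- vd P 0) (Q x - Q s) > 0"
    proof -
      have "\<exists>e>0. \<forall>x. 0 < \<bar>x - s\<bar> \<and> \<bar>x - s\<bar> < e \<longrightarrow> cross (- vd P 0) (Q x - Q s) > 0"
      proof (rule curve_local[OF SQ(1) _ SQ(3) SQ(4)])
        show "cross (- vd P 0) (vd Q s) = 0" unfolding vP0Q by (simp add: cross_neg cross_smult cross_self)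
        have "cross (vd Q s) (vd (vd Q) s) < 0"
          using curv_cross[OF SQ(5)[OF s(1)]] ii_Q SQ(5)[OF s(1)] s(1) by (simp add: mult_neg_pos)
        thus "cross (- vd P 0) (vd (vd Q) s) > 0" unfolding vP0Q using cpos
          by (simp add: cross_neg cross_smult mult_pos_neg)
      qed (use SQ(2) s(1) in auto)
      thus ?thesis using that by blast
    qed
    define m1 where "m1 = min (min e e1) 1 / 2"
    define m2 where "m2 = min (min e e2) 1 / 2"
    define s' where "s' = (if s \<le> 1/2 then s + m2 else s - m2)"
    have m1: "0 < m1" "m1 < e" "m1 < e1" "m1 \<le> 1" using e e1 unfolding m1_def by auto
    have m2: "0 < m2" "m2 < e" "m2 < e2" "m2 \<le> 1/2" using e e2 unfolding m2_def by auto
    have s'1: "s' \<in> {0..1}" "0 < \<bar>s' - s\<bar>" "\<bar>s' - s\<bar> < e" "\<bar>s' - s\<bar> < e2"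
      using s(1) m2 unfolding s'_def by auto
    have A1: "cross (vd P 0) (P m1 - P 0) > 0" using e1(2) m1 by auto
    have A2: "cross (- vd P 0) (Q s' - Q s) > 0" using e2(2) s'1 by auto
    have "cross (vd P 0) (transl (P 0 - Q s) (Q s') - P 0) = - cross (- vd P 0) (Q s' - Q s)"
      unfolding transl_def cross_def by (simp add: algebra_simps)
    hence "cross (vd P 0) (P m1 - P 0) * cross (vd P 0) (transl (P 0 - Q s) (Q s') - P 0) < 0"
      using A1 A2 by (simp add: mult_pos_neg)
    moreover have "cross (vd P 0) (P m1 - P 0) * cross (vd P 0) (transl (P 0 - Q s) (Q s') - P 0) > 0"
      using eP m1 s'1 by auto
    ultimately show False by simp
  qed
  have vdQ': "vd Q s = - of_real (norm (vd Q s)) * cis (\<psi> s)" if "s \<in> {0..1}" for s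
    using vdQ[OF that] sigma by simp
  have ab': "\<theta> 0 = \<alpha>" "\<theta> 1 = \<beta>" unfolding \<alpha>_def \<beta>_def by auto
  define FP where "FP y = P (gP y)" for y
  define FQ where "FQ y = Q (gQ (- y))" for y
  define kP where "kP y = 1 / curvature P (gP y)" for y
  define kQ where "kQ y = - 1 / curvature Q (gQ (- y))" for y
  have gPr: "gP y \<in> {0..1}" "\<theta> (gP y) = y" if "y \<in> {\<alpha>..\<beta>}" for y
    using RP(3) that unfolding gP_def ab' by auto
  have gQr: "gQ (- y) \<in> {0..1}" "\<psi> (gQ (- y)) = y" if "y \<in> {\<alpha>..\<beta>}" for y
  proof -
    have "- y \<in> {\<theta>Q 0..\<theta>Q 1}" using that thQ0 thQ1 by auto
    hence "gQ (- y) \<in> {0..1} \<and> \<theta>Q (gQ (- y)) = - y" using RQ(3)[folded gQ_def] by blast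
    thus "gQ (- y) \<in> {0..1}" "\<psi> (gQ (- y)) = y" unfolding \<theta>Q_def by auto
  qed
  have FPc: "continuous_on {\<alpha>..\<beta>} FP"
    unfolding FP_def
    by (rule continuous_on_compose2[OF Pc(1) RP(4)[folded gP_def, unfolded ab']]) (use gPr in auto)
  have gQmc: "continuous_on {\<alpha>..\<beta>} (\<lambda>y. gQ (- y))"
    by (rule continuous_on_compose2[OF RQ(4)[folded gQ_def, unfolded thQ0 thQ1]])
       (auto intro: continuous_intros)
  have FQc: "continuous_on {\<alpha>..\<beta>} FQ"
    unfolding FQ_def
    by (rule continuous_on_compose2[OF Qc(1) gQmc]) (use gQr in auto)
  have FPd: "(FP has_vector_derivative of_real (kP y) * cis y) (at y)" if y: "\<alpha> < y" "y < \<beta>" for y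
  proof -
    have yy: "y \<in> {\<theta> 0<..<\<theta> 1}" using y ab' by auto
    have "((P \<circ> gP) has_vector_derivative (1 / (curvature P (gP y) * norm (vd P (gP y)))) *\<^sub>R vd P (gP y)) (at y)"
      using RP(5) yy unfolding gP_def by blast
    moreover have "(1 / (curvature P (gP y) * norm (vd P (gP y)))) *\<^sub>R vd P (gP y) = of_real (kP y) * cis y"
    proof -
      have "vd P (gP y) = of_real (norm (vd P (gP y))) * cis y"
        using th(2)[OF gPr(1)] gPr(2) y by auto
      moreover have yc: "y \<in> {\<alpha>..\<beta>}" using y by auto
      ultimately show ?thesis unfolding kP_def using SP(5)[OF gPr(1)[OF yc]] ii_P[rule_format, OF gPr(1)[OF yc]]
        by (intro scale_helper) auto
    qed
    ultimately show ?thesis unfolding FP_def o_def by simp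
  qed
  have FQd: "(FQ has_vector_derivative of_real (kQ y) * cis y) (at y)" if y: "\<alpha> < y" "y < \<beta>" for y
  proof -
    have yc: "y \<in> {\<alpha>..\<beta>}" using y by auto
    have yy: "- y \<in> {\<theta>Q 0<..<\<theta>Q 1}" using y thQ0 thQ1 by auto
    have d1: "((Q \<circ> gQ) has_vector_derivative
       (1 / - (curvature Q (gQ (- y)) * norm (vd Q (gQ (- y))))) *\<^sub>R vd Q (gQ (- y))) (at (- y))"
      using RQ(5) yy unfolding gQ_def by blast
    have d0: "((\<lambda>x::real. - x) has_vector_derivative (- 1)) (at y)"
      by (auto intro!: derivative_eq_intros)
    have "(((Q \<circ> gQ) \<circ> (\<lambda>x. - x)) has_vector_derivative
       (- 1) *\<^sub>R ((1 / - (curvature Q (gQ (- y)) * norm (vd Q (gQ (- y))))) *\<^sub>R vd Q (gQ (- y)))) (at y)"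
      by (rule vector_diff_chain_at[OF d0]) (use d1 in simp)
    moreover have "vd Q (gQ (- y)) = - of_real (norm (vd Q (gQ (- y)))) * cis y"
      using vdQ'[OF gQr(1)[OF yc]] gQr(2)[OF yc] by simp
    hence "(- 1) *\<^sub>R ((1 / - (curvature Q (gQ (- y)) * norm (vd Q (gQ (- y))))) *\<^sub>R vd Q (gQ (- y)))
        = of_real (kQ y) * cis y"
      unfolding kQ_def using SQ(5)[OF gQr(1)[OF yc]] ii_Q[rule_format, OF gQr(1)[OF yc]]
      by (intro scale_helper2) auto
    ultimately show ?thesis unfolding FQ_def o_def by simp
  qed
  have kPpos: "kP y > 0" if "\<alpha> < y" "y < \<beta>" for y
    using ii_P[rule_format, OF gPr(1)[of y]] that unfolding kP_def by auto
  have kQpos: "kQ y > 0" if "\<alpha> < y" "y < \<beta>" for y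
    using ii_Q[rule_format, OF gQr(1)[of y]] that unfolding kQ_def by (auto simp: divide_neg_neg)
  have FPe: "FP \<alpha> = P 0" "FP \<beta> = P 1"
    unfolding FP_def gP_def using RP(2) ab' by (metis atLeastAtMost_iff order_refl zero_le_one)+
  have FQe: "FQ \<alpha> = Q 1" "FQ \<beta> = Q 0"
    unfolding FQ_def gQ_def using RQ(2) thQ0 thQ1 by (metis atLeastAtMost_iff order_refl zero_le_one)+
  note coneP = cone[OF ab narrow FPc FPd kPpos, unfolded FPe]
  note coneQ = cone[OF ab narrow FQc FQd kQpos, unfolded FQe]
  define h where "h y = kP y - kQ y" for y
  have hnz: "h y \<noteq> 0" if y: "\<alpha> < y" "y < \<beta>" for y
  proof
    assume h0: "h y = 0"
    have yc: "y \<in> {\<alpha>..\<beta>}" using y by auto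
    define t where "t = gP y"
    have t: "t \<in> {0..1}" "\<theta> t = y" using gPr[OF yc] unfolding t_def by auto
    have kp: "curvature P t > 0" using ii_P t by auto
    have kq: "curvature Q (gQ (- y)) < 0" using ii_Q gQr(1)[OF yc] by auto
    have sum0: "curvature P t + curvature Q (gQ (- y)) = 0"
      using h0 kp kq unfolding h_def kP_def kQ_def t_def[symmetric] by (auto simp: field_simps)
    obtain s' where s': "s' \<in> {0..1}" "parallel_pair P t Q s'" using iv_P t(1) by blast
    have vPt: "vd P t = of_real (norm (vd P t)) * cis y" using th(2)[OF t(1)] t(2) by simp
    have vQs: "vd Q s' = - of_real (norm (vd Q s')) * cis (\<psi> s')" using vdQ'[OF s'(1)] .
    have "0 = cross (vd P t) (vd Q s')" using s'(2) unfolding parallel_pair_def by simp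
    also have "\<dots> = norm (vd P t) * (- norm (vd Q s')) * sin (\<psi> s' - y)"
      using vPt vQs cross_polar[of "norm (vd P t)" y "- norm (vd Q s')" "\<psi> s'"] by (metis of_real_minus)
    finally have "sin (\<psi> s' - y) = 0" using SP(5)[OF t(1)] SQ(5)[OF s'(1)] by simp
    hence psis: "\<psi> s' = y" using sin_inj[of \<alpha> "\<psi> s'" \<beta> y] psi_range[OF s'(1)] yc narrow by auto
    have "gQ (\<theta>Q s') = s'" using RQ(2)[folded gQ_def] s'(1) by blast
    hence ss: "s' = gQ (- y)" using psis unfolding \<theta>Q_def by simp
    have u: "vd P t / of_real (norm (vd P t)) = cis y" using div_helper[OF vPt] SP(5)[OF t(1)] by simp
    have v: "vd Q s' / of_real (norm (vd Q s')) = - cis y"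
      using div_helper2[OF vQs] SQ(5)[OF s'(1)] psis by simp
    have "gives_asymptote P t Q s'"
      unfolding gives_asymptote_def Let_def u v dotp_cis using s'(2) sum0 ss by simp
    hence "CSS_has_asymptote [P, Q]" unfolding CSS_has_asymptote_def by auto
    thus False using noas by simp
  qed
  have cPc: "continuous_on {\<alpha>..\<beta>} (\<lambda>y. curvature P (gP y))"
    by (rule continuous_on_compose2[OF Pc(3) RP(4)[folded gP_def, unfolded ab']]) (use gPr in auto)
  have cQc: "continuous_on {\<alpha>..\<beta>} (\<lambda>y. curvature Q (gQ (- y)))"
    by (rule continuous_on_compose2[OF Qc(3) gQmc]) (use gQr in auto)
  have hc: "continuous_on {\<alpha>..\<beta>} h"
  proof -
    have "continuous_on {\<alpha>..\<beta>} (\<lambda>y. 1 / curvature P (gP y))"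
      by (rule continuous_on_divide[OF continuous_on_const cPc])
         (use ii_P gPr(1) in fastforce)
    moreover have "continuous_on {\<alpha>..\<beta>} (\<lambda>y. - 1 / curvature Q (gQ (- y)))"
      by (rule continuous_on_divide[OF continuous_on_const cQc])
         (use ii_Q gQr(1) in fastforce)
    ultimately show ?thesis unfolding h_def kP_def kQ_def by (rule continuous_on_diff)
  qed
  have Gd: "((\<lambda>y. FP y - FQ y) has_vector_derivative of_real (h y) * cis y) (at y)"
    if "\<alpha> < y" "y < \<beta>" for y
    using has_vector_derivative_diff[OF FPd[OF that] FQd[OF that]] unfolding h_def
    by (simp add: algebra_simps)
  have Hd: "((\<lambda>y. FQ y - FP y) has_vector_derivative of_real (- h y) * cis y) (at y)"
    if "\<alpha> < y" "y < \<beta>" for y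
    using has_vector_derivative_diff[OF FQd[OF that] FPd[OF that]] unfolding h_def
    by (simp add: algebra_simps)
  have Gc: "continuous_on {\<alpha>..\<beta>} (\<lambda>y. FP y - FQ y)" "continuous_on {\<alpha>..\<beta>} (\<lambda>y. FQ y - FP y)"
    using FPc FQc by (auto intro: continuous_intros)
  define a where "a = cis \<alpha>"
  define b where "b = cis \<beta>"
  define DP where "DP = P 1 - P 0"
  define DQ where "DQ = Q 0 - Q 1"
  have c0: "cross a b > 0" unfolding a_def b_def cross_cis using ab narrow by (intro sin_gt_zero) auto
  have sgn: "(cross a DP > cross a DQ \<and> cross DP b > cross DQ b) \<or>
             (cross a DP < cross a DQ \<and> cross DP b < cross DQ b)"
  proof (cases "\<forall>y. \<alpha> < y \<and> y < \<beta> \<longrightarrow> h y > 0")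
    case True
    have "cross a (DP - DQ) > 0" "cross (DP - DQ) b > 0"
      using cone[OF ab narrow Gc(1) Gd] True unfolding a_def b_def DP_def DQ_def FPe FQe
      by (simp_all add: algebra_simps)
    thus ?thesis by (simp add: cross_diff)
  next
    case False
    hence F: "\<forall>y. \<alpha> < y \<and> y < \<beta> \<longrightarrow> - h y > 0" using const_sign[OF hc hnz] by auto
    have "cross a (DQ - DP) > 0" "cross (DQ - DP) b > 0"
      using cone[OF ab narrow Gc(2) Hd] F unfolding a_def b_def DP_def DQ_def FPe FQe
      by (simp_all add: algebra_simps)
    thus ?thesis by (simp add: cross_diff)
  qed
  have PQa: "cross a DP > 0" "cross DP b > 0" "cross a DQ > 0" "cross DQ b > 0"
    using coneP coneQ unfolding a_def b_def DP_def DQ_def by auto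
  define xP where "xP = cross DP b / cross a b"
  define yP where "yP = cross a DP / cross a b"
  define xQ where "xQ = cross DQ b / cross a b"
  define yQ where "yQ = cross a DQ / cross a b"
  have pos: "xP > 0" "yP > 0" "xQ > 0" "yQ > 0"
    unfolding xP_def yP_def xQ_def yQ_def using PQa c0 by auto
  have dec: "p1 - p0 = of_real xP * a + of_real yP * b" "q1 - q0 = of_real xQ * a + of_real yQ * b"
    unfolding xP_def yP_def xQ_def yQ_def
    using decomp[of a b DP] decomp[of a b DQ] c0 P_ends Q_ends unfolding DP_def DQ_def by auto
  have ord: "(xP > xQ \<and> yP > yQ) \<or> (xP < xQ \<and> yP < yQ)"
    unfolding xP_def yP_def xQ_def yQ_def using sgn c0 by (auto simp: divide_strict_right_mono)
  have A: "vd Q 1 = of_real (- norm (vd Q 1)) * a"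
    using vdQ'[of 1] psi1 unfolding a_def by simp
  have B: "vd Q 0 = of_real (- norm (vd Q 0)) * b"
    using vdQ'[of 0] psi0 unfolding b_def by simp
  have "\<not> (let p1' = transl (q0 - p0) p1;
                  l0 = line_through q0 (vd Q 0);
                  lp' = line_through p1' (vd Q 1);
                  c = line_inter lp' (tangent_line Q 0);
                  b0 = line_inter l0 lp';
                  b1 = line_inter (tangent_line Q 1) (tangent_line Q 0);
                  R = {vquot (c - b1) (q1 - b1), vquot (c - b0) (p1' - b0)}
              in Max R < 1 \<or> Min R > 1)"
    by (rule rho_fail[OF _ A _ B _ Q_ends(1,2) pos dec ord])
       (use c0 SQ(5)[of 0] SQ(5)[of 1] in auto)
  thus False using rho by simp
qed

end
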